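(* Take any $\theta\in(0,1]$. a) If $\widetilde F$ is a probability distribution function on $[0,\infty)$, then $\widetilde F=\widetilde F_{(\mathrm{Exp},\theta)}$ iff $\widetilde F(t)=(1-\theta)+\theta\int_0^t[1-\widetilde F(s)]\,ds$ for all $t\ge0$. b) If $\widetilde\Phi$ is a stationary sequence of random variables in $[0,\infty)$ with finite-dimensional distribution functions $\widetilde F^{[d]}$ (where $\widetilde F^{[0]}:=1$), then $\mathrm{law}(\widetilde\Phi)=\mathrm{law}(\widetilde\Phi_{(\mathrm{Exp},\theta)})$ iff $$\widetilde F^{[d+1]}(t_0,t_1,\ldots,t_d)=(1-\theta)\widetilde F^{[d]}(t_1,\ldots,t_d)+\theta\int_0^{t_0}[\widetilde F^{[d]}(t_1,\ldots,t_d)-\widetilde F^{[d+1]}(s,t_1,\ldots,t_d)]\,ds$$ whenever $d\ge0$ and $t_j\ge0$.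
   Context: $\widetilde F_{(\mathrm{Exp},\theta)}(t):=(1-\theta)+\theta(1-e^{-\theta t})$, $t\ge0$, and $\widetilde\Phi_{(\mathrm{Exp},\theta)}$ is an iid sequence each distributed according to $\widetilde F_{(\mathrm{Exp},\theta)}$. For $\widetilde\Phi=(\widetilde\varphi^{(j)})_{j\ge0}$, $\widetilde F^{[d]}(t_0,\ldots,t_{d-1}):=\Pr[\widetilde\varphi^{(0)}\le t_0,\ldots,\widetilde\varphi^{(d-1)}\le t_{d-1}]$. *)

theory Defs
  imports "HOL-Probability.Probability"
begin

definition Fexp :: "real \<Rightarrow> real \<Rightarrow> real" where
  "Fexp \<theta> t = (if t < 0 then 0 else (1 - \<theta>) + \<theta> * (1 - exp (- \<theta> * t)))"

definition prob_distfun_nonneg :: "(real \<Rightarrow> real) \<Rightarrow> bool" where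
  "prob_distfun_nonneg F \<longleftrightarrow> mono F \<and> (\<forall>t. continuous (at_right t) F)
     \<and> (\<forall>t<0. F t = 0) \<and> (F \<longlongrightarrow> 1) at_top"

definition exp_law :: "real \<Rightarrow> real measure" where
  "exp_law \<theta> = interval_measure (Fexp \<theta>)"

definition seq_law :: "'a measure \<Rightarrow> (nat \<Rightarrow> 'a \<Rightarrow> real) \<Rightarrow> (nat \<Rightarrow> real) measure" where
  "seq_law M X = distr M (PiM UNIV (\<lambda>_. borel)) (\<lambda>\<omega> i. X i \<omega>)"

definition exp_seq_law :: "real \<Rightarrow> (nat \<Rightarrow> real) measure" where
  "exp_seq_law \<theta> = PiM UNIV (\<lambda>_. exp_law \<theta>)"

definition stationary_seq :: "'a measure \<Rightarrow> (nat \<Rightarrow> 'a \<Rightarrow> real) \<Rightarrow> bool" where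
  "stationary_seq M X \<longleftrightarrow> seq_law M (\<lambda>i. X (Suc i)) = seq_law M X"

definition fdd :: "'a measure \<Rightarrow> (nat \<Rightarrow> 'a \<Rightarrow> real) \<Rightarrow> nat \<Rightarrow> (nat \<Rightarrow> real) \<Rightarrow> real" where
  "fdd M X d t = measure M {\<omega> \<in> space M. \<forall>j<d. X j \<omega> \<le> t j}"

end

theory Submission
  imports Defs "HOL-Analysis.Analysis" "HOL-Real_Asymp.Real_Asymp"
begin

lemma Fexp_nonneg_eq: "0 \<le> t \<Longrightarrow> Fexp \<theta> t = 1 - \<theta> * exp (- \<theta> * t)"
  by (simp add: Fexp_def algebra_simps)

lemma Fexp_integral:
  assumes "0 \<le> t"
  shows "integral {0..t} (\<lambda>s. c - c * Fexp \<theta> s) = c * (1 - exp (- \<theta> * t))"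
proof -
  have "((\<lambda>s. c * \<theta> * exp (- \<theta> * s)) has_integral ((- c * exp (- \<theta> * t)) - (- c * exp (- \<theta> * 0)))) {0..t}"
  proof (rule fundamental_theorem_of_calculus[of 0 t "\<lambda>s. - c * exp (- \<theta> * s)" "\<lambda>s. c * \<theta> * exp (- \<theta> * s)", OF assms])
    fix x assume "x \<in> {0..t}"
    have "((\<lambda>s. - c * exp (- \<theta> * s)) has_real_derivative (- c * (exp (- \<theta> * x) * (- \<theta>)))) (at x within {0..t})"
      by (auto intro!: derivative_eq_intros)
    then show "((\<lambda>s. - c * exp (- \<theta> * s)) has_vector_derivative c * \<theta> * exp (- \<theta> * x)) (at x within {0..t})"
      by (simp add: has_real_derivative_iff_has_vector_derivative[symmetric] algebra_simps)
  qed
  then have "integral {0..t} (\<lambda>s. c * \<theta> * exp (- \<theta> * s)) = (- c * exp (- \<theta> * t)) - (- c * exp (- \<theta> * 0))"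
    by (rule integral_unique)
  then have "integral {0..t} (\<lambda>s. c * \<theta> * exp (- \<theta> * s)) = c * (1 - exp (- \<theta> * t))"
    by (simp add: algebra_simps)
  moreover have "integral {0..t} (\<lambda>s. c - c * Fexp \<theta> s) = integral {0..t} (\<lambda>s. c * \<theta> * exp (- \<theta> * s))"
    by (rule integral_cong) (simp add: Fexp_nonneg_eq algebra_simps)
  ultimately show ?thesis by simp
qed

lemma Fexp_eqn:
  assumes "0 \<le> t"
  shows "c * Fexp \<theta> t = (1 - \<theta>) * c + \<theta> * integral {0..t} (\<lambda>s. c - c * Fexp \<theta> s)"
  using assms by (simp add: Fexp_integral Fexp_nonneg_eq algebra_simps)

lemma ode_unique:
  fixes H :: "real \<Rightarrow> real" and c \<theta> :: real
  assumes mono: "mono_on {0..} H"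
  and eq: "\<And>s. 0 \<le> s \<Longrightarrow> H s = (1-\<theta>)*c + \<theta> * integral {0..s} (\<lambda>u. c - H u)"
  and t: "0 \<le> t"
  shows "H t = c * Fexp \<theta> t"
proof -
  define I where "I s = integral {0..s} (\<lambda>u. c - H u)" for s
  have int: "(\<lambda>u. c - H u) integrable_on {0..b}" for b
  proof -
    have "mono_on {0..b} H" using mono by (auto simp: mono_on_def)
    then have "H integrable_on {0..b}" by (rule integrable_on_mono_on)
    then show ?thesis by (intro integrable_diff integrable_const_ivl)
  qed
  have contI: "continuous_on {0..b} I" for b
    unfolding I_def by (rule indefinite_integral_continuous_1[OF int])
  have Hc: "c - H u = \<theta> * c - \<theta> * I u" if "0 \<le> u" for u
    using eq[OF that] by (simp add: I_def algebra_simps)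
  have contH: "continuous_on {0..b} (\<lambda>u. c - H u)" for b
  proof -
    have "continuous_on {0..b} (\<lambda>u. \<theta> * c - \<theta> * I u)"
      by (intro continuous_intros contI)
    then show ?thesis by (rule continuous_on_cong[THEN iffD1, rotated 2]) (auto simp: Hc)
  qed
  define K where "K s = (I s - c) * exp (\<theta> * s)" for s
  have dK: "(K has_real_derivative 0) (at x within {0..t})" if x: "x \<in> {0..t}" for x
  proof -
    have dI: "(I has_real_derivative (c - H x)) (at x within {0..t})"
      unfolding I_def has_real_derivative_iff_has_vector_derivative
      by (rule integral_has_vector_derivative[OF contH x])
    have "(K has_real_derivative ((c - H x) * exp (\<theta> * x) + (I x - c) * (exp (\<theta> * x) * \<theta>))) (at x within {0..t})"
      unfolding K_def by (auto intro!: derivative_eq_intros dI)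
    moreover have z: "c - H x - \<theta> * c + \<theta> * I x = 0" using Hc[of x] x by auto
    have "(c - H x) * exp (\<theta> * x) + (I x - c) * (exp (\<theta> * x) * \<theta>) = (c - H x - \<theta> * c + \<theta> * I x) * exp (\<theta> * x)"
      by (simp add: algebra_simps)
    then have "(c - H x) * exp (\<theta> * x) + (I x - c) * (exp (\<theta> * x) * \<theta>) = 0"
      using z by simp
    ultimately show ?thesis by simp
  qed
  obtain C where C: "\<forall>x\<in>{0..t}. K x = C"
    using has_field_derivative_zero_constant[of "{0..t}" K] dK by auto
  have "K t = K 0" using C t by auto
  also have "K 0 = - c" by (simp add: K_def I_def)
  finally have "I t = c - c * exp (- \<theta> * t)"
    by (simp add: K_def field_simps exp_minus)
  moreover have "H t = (1-\<theta>)*c + \<theta> * I t" using eq[OF t] by (simp add: I_def)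
  ultimately have "H t = (1-\<theta>)*c + \<theta> * (c - c * exp (- \<theta> * t))" by simp
  then show ?thesis using t by (simp add: Fexp_nonneg_eq algebra_simps)
qed

lemma Fexp_mono:
  assumes "0 < \<theta>" "\<theta> \<le> 1" "x \<le> y"
  shows "Fexp \<theta> x \<le> Fexp \<theta> y"
proof -
  have e: "exp (- \<theta> * y) \<le> 1" if "0 \<le> y" for y
    using assms that by simp
  show ?thesis
    using assms e[of y] by (auto simp: Fexp_def mult_le_cancel_left1 mult_left_le)
qed

lemma Fexp_nonneg: "0 < \<theta> \<Longrightarrow> \<theta> \<le> 1 \<Longrightarrow> 0 \<le> Fexp \<theta> x"
  using Fexp_mono[of \<theta> "-1" x] Fexp_mono[of \<theta> x "-1"] by (cases "x < 0") (auto simp: Fexp_def)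

lemma Fexp_rcont:
  assumes "0 < \<theta>"
  shows "continuous (at_right a) (Fexp \<theta>)"
proof (cases "a < 0")
  case True
  have "\<forall>\<^sub>F t in at_right a. Fexp \<theta> t = 0"
    unfolding eventually_at_right[OF True] using True by (auto simp: Fexp_def intro!: exI[of _ 0])
  then have "(Fexp \<theta> \<longlongrightarrow> 0) (at_right a)"
    by (rule tendsto_eventually)
  then show ?thesis using True by (simp add: continuous_within Fexp_def)
next
  case False
  have "((\<lambda>t. 1 - \<theta> * exp (- \<theta> * t)) \<longlongrightarrow> 1 - \<theta> * exp (- \<theta> * a)) (at_right a)"
    by (intro tendsto_intros)
  moreover have ev: "\<forall>\<^sub>F t in at_right a. 1 - \<theta> * exp (- \<theta> * t) = Fexp \<theta> t"
    using eventually_at_right_less[of a] by eventually_elim (use False in \<open>auto simp: Fexp_nonneg_eq\<close>)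
  ultimately have "(Fexp \<theta> \<longlongrightarrow> 1 - \<theta> * exp (- \<theta> * a)) (at_right a)"
    using tendsto_cong[OF ev] by simp
  then show ?thesis using False by (simp add: continuous_within Fexp_nonneg_eq)
qed

lemma Fexp_bot: "(Fexp \<theta> \<longlongrightarrow> 0) at_bot"
proof -
  have "\<forall>\<^sub>F t in at_bot. Fexp \<theta> t = 0"
    unfolding eventually_at_bot_linorder by (auto simp: Fexp_def intro!: exI[of _ "-1"])
  then show ?thesis by (rule tendsto_eventually)
qed

lemma Fexp_top:
  assumes "0 < \<theta>"
  shows "(Fexp \<theta> \<longlongrightarrow> 1) at_top"
proof -
  have "((\<lambda>t. 1 - \<theta> * exp (- \<theta> * t)) \<longlongrightarrow> 1) at_top"
    using assms by real_asymp
  moreover have ev: "\<forall>\<^sub>F t in at_top. 1 - \<theta> * exp (- \<theta> * t) = Fexp \<theta> t"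
    unfolding eventually_at_top_linorder by (auto simp: Fexp_nonneg_eq intro!: exI[of _ 0])
  ultimately show ?thesis
    using tendsto_cong[OF ev] by simp
qed

lemma exp_law_real_distribution:
  assumes "0 < \<theta>" "\<theta> \<le> 1"
  shows "real_distribution (exp_law \<theta>)"
  unfolding exp_law_def
  by (rule real_distribution_interval_measure) (use assms in \<open>auto intro: Fexp_mono Fexp_rcont Fexp_bot Fexp_top\<close>)

lemma exp_law_prob: "0 < \<theta> \<Longrightarrow> \<theta> \<le> 1 \<Longrightarrow> prob_space (exp_law \<theta>)"
  using exp_law_real_distribution real_distribution_def by blast

lemma exp_law_Iic:
  assumes "0 < \<theta>" "\<theta> \<le> 1"
  shows "emeasure (exp_law \<theta>) {..x} = ennreal (Fexp \<theta> x)"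
  unfolding exp_law_def
  by (rule emeasure_interval_measure_Iic) (use assms in \<open>auto intro: Fexp_mono Fexp_rcont Fexp_bot\<close>)

lemma sets_exp_law[simp]: "sets (exp_law \<theta>) = sets borel"
  by (simp add: exp_law_def)

lemma space_exp_law[simp]: "space (exp_law \<theta>) = UNIV"
  by (simp add: exp_law_def)

lemma space_PiM_UNIV_real: "space (PiM I (\<lambda>_. N)) = (\<Pi>\<^sub>E i\<in>I. space N)"
  by (simp add: space_PiM)

lemma mem_prod_emb_UNIV:
  "x \<in> prod_emb UNIV (\<lambda>_. N) K (\<Pi>\<^sub>E j\<in>K. B j) \<longleftrightarrow> (\<forall>j\<in>K. x j \<in> B j)" if "space N = UNIV"
  using that by (auto simp: prod_emb_iff PiE_iff)

lemma fdd_of_law: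
  assumes th: "0 < \<theta>" "\<theta> \<le> 1"
  and M: "prob_space M" and X: "\<And>i. X i \<in> borel_measurable M"
  and law: "seq_law M X = exp_seq_law \<theta>"
  shows "fdd M X d t = (\<Prod>j<d. Fexp \<theta> (t j))"
proof -
  interpret prob_space M by fact
  let ?P = "PiM UNIV (\<lambda>_::nat. borel :: real measure)"
  let ?S = "prod_emb UNIV (\<lambda>_. borel :: real measure) {..<d} (\<Pi>\<^sub>E j\<in>{..<d}. {..t j})"
  have Xm: "(\<lambda>\<omega> i. X i \<omega>) \<in> M \<rightarrow>\<^sub>M ?P"
    by (rule measurable_PiM_single') (auto simp: X)
  have Sm: "?S \<in> sets ?P" by (rule sets_PiM_I) auto
  have "fdd M X d t = measure M ((\<lambda>\<omega> i. X i \<omega>) -` ?S \<inter> space M)"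
    unfolding fdd_def by (rule arg_cong[where f="measure M"]) (auto simp: mem_prod_emb_UNIV)
  also have "\<dots> = measure (seq_law M X) ?S"
    unfolding seq_law_def by (rule measure_distr[OF Xm Sm, symmetric])
  also have "?S = prod_emb UNIV (\<lambda>_. exp_law \<theta>) {..<d} (\<Pi>\<^sub>E j\<in>{..<d}. {..t j})"
    by (rule set_eqI) (simp add: mem_prod_emb_UNIV)
  also have "measure (seq_law M X) \<dots> = enn2real (\<Prod>j<d. emeasure (exp_law \<theta>) {..t j})"
    unfolding law exp_seq_law_def measure_def
    by (subst emeasure_PiM_emb) (auto simp: exp_law_prob[OF th])
  also have "\<dots> = (\<Prod>j<d. Fexp \<theta> (t j))"
    by (simp add: exp_law_Iic[OF th] prod_ennreal Fexp_nonneg[OF th] prod_nonneg)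
  finally show ?thesis .
qed

lemma bound_fin:
  fixes f :: "'i \<Rightarrow> real"
  assumes "finite I"
  obtains k :: nat where "\<And>j. j \<in> I \<Longrightarrow> f j \<le> real k"
proof -
  obtain k :: nat where k: "(\<Sum>j\<in>I. \<bar>f j\<bar>) \<le> real k" using real_arch_simple by blast
  have "f j \<le> real k" if "j \<in> I" for j
  proof -
    have "f j \<le> \<bar>f j\<bar>" by simp
    also have "\<dots> \<le> (\<Sum>j\<in>I. \<bar>f j\<bar>)"
      by (rule member_le_sum) (use assms that in auto)
    finally show ?thesis using k by simp
  qed
  then show ?thesis using that by blast
qed

lemma box_gen:
  fixes I :: "'i set"
  assumes fin: "finite I"
  shows "sets (PiM I (\<lambda>_. borel :: real measure)) =
    sigma_sets (\<Pi>\<^sub>E i\<in>I. UNIV) {(\<Pi>\<^sub>E j\<in>I. {..a j}) | a. True}"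
    (is "_ = sigma_sets ?\<Omega> ?E")
proof
  show "sigma_sets ?\<Omega> ?E \<subseteq> sets (PiM I (\<lambda>_. borel))"
  proof -
    have "?E \<subseteq> sets (PiM I (\<lambda>_. borel :: real measure))"
      proof safe
        fix a :: "'i \<Rightarrow> real"
        show "(\<Pi>\<^sub>E j\<in>I. {..a j}) \<in> sets (PiM I (\<lambda>_. borel :: real measure))"
          by (rule sets_PiM_I_finite[OF fin]) simp
      qed
    from sets.sigma_sets_subset[OF this] show ?thesis
      by (simp add: space_PiM)
  qed
next
  have gen: "{f \<in> ?\<Omega>. f i \<in> A} \<in> sigma_sets ?\<Omega> ?E" if i: "i \<in> I" and A: "A \<in> sets borel" for i A
  proof -
    have atM: "sets (borel :: real measure) = sigma_sets UNIV (range atMost)"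
      by (subst borel_eq_atMost) (simp add: sets_measure_of)
    have "{(\<lambda>f. f i) -` B \<inter> ?\<Omega> | B. B \<in> sigma_sets UNIV (range atMost)}
       = sigma_sets ?\<Omega> {(\<lambda>f. f i) -` B \<inter> ?\<Omega> | B. B \<in> range (atMost :: real \<Rightarrow> real set)}"
      by (rule sigma_sets_vimage_commute) auto
    moreover have "{(\<lambda>f. f i) -` B \<inter> ?\<Omega> | B. B \<in> range (atMost :: real \<Rightarrow> real set)} \<subseteq> sigma_sets ?\<Omega> ?E"
    proof safe
      fix a :: real
      define C where "C k = (\<Pi>\<^sub>E j\<in>I. if j = i then {..a} else {..real k})" for k :: nat
      have "C k \<in> ?E" for k
      proof -
        have "(\<lambda>j. if j = i then {..a} else {..real k}) = (\<lambda>j. {..(if j = i then a else real k)})" by (rule ext) simp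
        then show ?thesis unfolding C_def by (intro CollectI exI[of _ "\<lambda>j. if j = i then a else real k"]) simp
      qed
      then have "(\<Union>k. C k) \<in> sigma_sets ?\<Omega> ?E"
        by (intro sigma_sets.Union sigma_sets.Basic)
      moreover have "x \<in> (\<Union>k. C k) \<longleftrightarrow> x \<in> (\<lambda>f. f i) -` {..a} \<inter> ?\<Omega>" for x
      proof
        assume "x \<in> (\<Union>k. C k)" then show "x \<in> (\<lambda>f. f i) -` {..a} \<inter> ?\<Omega>"
          using i by (simp add: C_def PiE_iff) (metis atMost_iff)
      next
        assume x: "x \<in> (\<lambda>f. f i) -` {..a} \<inter> ?\<Omega>"
        obtain k :: nat where "\<And>j. j \<in> I \<Longrightarrow> x j \<le> real k" using bound_fin[OF fin] by blast
        then have "x \<in> C k" using x by (simp add: C_def PiE_iff)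
        then show "x \<in> (\<Union>k. C k)" by blast
      qed
      then have "(\<Union>k. C k) = (\<lambda>f. f i) -` {..a} \<inter> ?\<Omega>" by blast
      ultimately show "(\<lambda>f. f i) -` {..a} \<inter> ?\<Omega> \<in> sigma_sets ?\<Omega> ?E" by simp
    qed
    ultimately have "{(\<lambda>f. f i) -` B \<inter> ?\<Omega> | B. B \<in> sigma_sets UNIV (range atMost)} \<subseteq> sigma_sets ?\<Omega> ?E"
      by (metis (no_types, lifting) sigma_sets_mono)
    moreover have "{f \<in> ?\<Omega>. f i \<in> A} = (\<lambda>f. f i) -` A \<inter> ?\<Omega>" by auto
    moreover have "(\<lambda>f. f i) -` A \<inter> ?\<Omega> \<in> {(\<lambda>f. f i) -` B \<inter> ?\<Omega> | B. B \<in> sigma_sets UNIV (range atMost)}"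
      using A atM by blast
    ultimately show ?thesis by auto
  qed
  have "sets (PiM I (\<lambda>_. borel :: real measure)) =
     sigma_sets ?\<Omega> {{f \<in> ?\<Omega>. f i \<in> A} | i A. i \<in> I \<and> A \<in> sets borel}"
    by (subst sets_PiM_single) simp
  also have "\<dots> \<subseteq> sigma_sets ?\<Omega> ?E"
    by (rule sigma_sets_mono) (use gen in blast)
  finally show "sets (PiM I (\<lambda>_. borel :: real measure)) \<subseteq> sigma_sets ?\<Omega> ?E" .
qed

lemma Int_stable_boxes: "Int_stable {(\<Pi>\<^sub>E j\<in>{..<n}. {..a j}) | a :: nat \<Rightarrow> real. True}"
proof -
      have e: "{(\<Pi>\<^sub>E j\<in>{..<n}. {..a j}) | a :: nat \<Rightarrow> real. True} = range (\<lambda>a. \<Pi>\<^sub>E j\<in>{..<n}. {..a j})" by (simp add: full_SetCompr_eq)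
      have "\<exists>c\<in>UNIV. (\<Pi>\<^sub>E j\<in>{..<n}. {..a j}) \<inter> (\<Pi>\<^sub>E j\<in>{..<n}. {..b j}) = (\<Pi>\<^sub>E j\<in>{..<n}. {..c j})" for a b :: "nat \<Rightarrow> real"
      proof -
        have "(\<Pi>\<^sub>E j\<in>{..<n}. {..a j}) \<inter> (\<Pi>\<^sub>E j\<in>{..<n}. {..b j}) = (\<Pi>\<^sub>E j\<in>{..<n}. {..min (a j) (b j)})"
          unfolding PiE_Int by (rule PiE_cong) auto
        then show ?thesis by (intro bexI[of _ "\<lambda>j. min (a j) (b j)"]) auto
      qed
      then show ?thesis unfolding e by (rule Int_stableI_image)
qed

lemma fin_law_eq:
  assumes th: "0 < \<theta>" "\<theta> \<le> 1"
  and M: "prob_space M" and X: "\<And>i. X i \<in> borel_measurable M"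
  and prod: "\<And>t. fdd M X n t = (\<Prod>j<n. Fexp \<theta> (t j))"
  shows "distr M (PiM {..<n} (\<lambda>_. borel :: real measure)) (\<lambda>\<omega>. \<lambda>i\<in>{..<n}. X i \<omega>) = PiM {..<n} (\<lambda>_. exp_law \<theta>)"
    (is "?D = ?P")
proof -
  interpret prob_space M by fact
  interpret L: prob_space "exp_law \<theta>" by (rule exp_law_prob[OF th])
  interpret P: product_prob_space "\<lambda>_::nat. exp_law \<theta>" "{..<n}" ..
  let ?\<Omega> = "\<Pi>\<^sub>E i\<in>{..<n}. (UNIV :: real set)"
  let ?E = "{(\<Pi>\<^sub>E j\<in>{..<n}. {..a j}) | a :: nat \<Rightarrow> real. True}"
  have meas: "(\<lambda>\<omega>. \<lambda>i\<in>{..<n}. X i \<omega>) \<in> M \<rightarrow>\<^sub>M PiM {..<n} (\<lambda>_. borel :: real measure)"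
    by (rule measurable_restrict) (rule X)
  have h1: "Int_stable ?E"
    by (rule Int_stable_boxes)
  have h2: "?E \<subseteq> Pow ?\<Omega>"
    by (auto simp: PiE_iff)
  have h4: "sets ?D = sigma_sets ?\<Omega> ?E"
    using box_gen[of "{..<n}"] by simp
  have h5: "sets ?P = sigma_sets ?\<Omega> ?E"
    using box_gen[of "{..<n}"] sets_PiM_cong[of "{..<n}" "{..<n}" "\<lambda>_. exp_law \<theta>" "\<lambda>_. borel"] by simp
  have h6: "range (\<lambda>k. \<Pi>\<^sub>E j\<in>{..<n}. {..real k}) \<subseteq> ?E"
    by auto
  have h7: "(\<Union>k. \<Pi>\<^sub>E j\<in>{..<n}. {..real k}) = ?\<Omega>"
  proof (rule set_eqI, rule iffI)
      fix x assume "x \<in> ?\<Omega>"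
      obtain k :: nat where "\<And>j. j \<in> {..<n} \<Longrightarrow> x j \<le> real k" using bound_fin[of "{..<n}" x] by blast
      then have "x \<in> (\<Pi>\<^sub>E j\<in>{..<n}. {..real k})" using \<open>x \<in> ?\<Omega>\<close> by (simp add: PiE_iff)
      then show "x \<in> (\<Union>k. \<Pi>\<^sub>E j\<in>{..<n}. {..real k})" by blast
    next
      fix x assume "x \<in> (\<Union>k. \<Pi>\<^sub>E j\<in>{..<n}. {..real k})"
      then obtain k :: nat where "x \<in> (\<Pi>\<^sub>E j\<in>{..<n}. {..real k})" by blast
      then show "x \<in> ?\<Omega>" by (simp add: PiE_iff)
    qed
  have h8: "emeasure ?D (\<Pi>\<^sub>E j\<in>{..<n}. {..real k}) \<noteq> \<infinity>" for k
  proof -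
      interpret D: prob_space ?D by (rule prob_space_distr[OF meas])
      show ?thesis by simp
    qed
  have h3: "emeasure ?D B = emeasure ?P B" if "B \<in> ?E" for B
  proof -
      from that obtain a where B: "B = (\<Pi>\<^sub>E j\<in>{..<n}. {..a j})" by blast
      have Bs: "B \<in> sets (PiM {..<n} (\<lambda>_. borel :: real measure))"
        unfolding B by (rule sets_PiM_I_finite) auto
      have pre: "(\<lambda>\<omega>. \<lambda>i\<in>{..<n}. X i \<omega>) -` B \<inter> space M = {\<omega> \<in> space M. \<forall>j<n. X j \<omega> \<le> a j}"
        unfolding B by (rule set_eqI) (auto simp: restrict_PiE_iff Pi_iff)
      have "emeasure ?D B = emeasure M {\<omega> \<in> space M. \<forall>j<n. X j \<omega> \<le> a j}"
        by (simp add: emeasure_distr[OF meas Bs] pre)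
      also have "\<dots> = ennreal (fdd M X n a)"
        unfolding fdd_def by (rule emeasure_eq_measure)
      also have "\<dots> = ennreal (\<Prod>j<n. Fexp \<theta> (a j))" by (simp add: prod)
      also have "\<dots> = (\<Prod>j<n. emeasure (exp_law \<theta>) {..a j})"
        by (simp add: exp_law_Iic[OF th] prod_ennreal Fexp_nonneg[OF th])
      also have "\<dots> = emeasure ?P B"
        unfolding B by (subst P.emeasure_PiM) auto
      finally show ?thesis .
    qed
  show ?thesis
    by (rule measure_eqI_generator_eq[OF h1 h2 h3 h4 h5 h6 h7 h8])
qed

lemma seq_law_eq:
  assumes th: "0 < \<theta>" "\<theta> \<le> 1"
  and M: "prob_space M" and X: "\<And>i. X i \<in> borel_measurable M"
  and prod: "\<And>n t. fdd M X n t = (\<Prod>j<n. Fexp \<theta> (t j))"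
  shows "seq_law M X = exp_seq_law \<theta>"
proof -
  interpret prob_space M by fact
  interpret L: prob_space "exp_law \<theta>" by (rule exp_law_prob[OF th])
  interpret P: product_prob_space "\<lambda>_::nat. exp_law \<theta>" UNIV ..
  have Xm: "(\<lambda>\<omega> i. X i \<omega>) \<in> M \<rightarrow>\<^sub>M PiM UNIV (\<lambda>_. borel :: real measure)"
    by (rule measurable_PiM_single') (auto simp: X)
  show ?thesis unfolding exp_seq_law_def
  proof (rule P.PiM_eq)
    show "sets (seq_law M X) = sets (PiM UNIV (\<lambda>_. exp_law \<theta>))"
      unfolding seq_law_def sets_distr by (rule sets_PiM_cong) simp_all
  next
    fix J :: "nat set" and F
    assume J: "finite J" "J \<subseteq> UNIV" and F: "\<And>j. j \<in> J \<Longrightarrow> F j \<in> sets (exp_law \<theta>)"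
    define n where "n = Suc (\<Sum>J)"
    have Jn: "j < n" if "j \<in> J" for j
    proof -
      have "j \<le> \<Sum>J" using member_le_sum[of j J "\<lambda>x. x"] that J by simp
      then show ?thesis by (simp add: n_def)
    qed
    interpret P2: product_prob_space "\<lambda>_::nat. exp_law \<theta>" "{..<n}" ..
    let ?B = "\<Pi>\<^sub>E j\<in>{..<n}. if j \<in> J then F j else UNIV"
    let ?C = "prod_emb UNIV (\<lambda>_. exp_law \<theta>) J (\<Pi>\<^sub>E j\<in>J. F j)"
    have C_eq: "?C = prod_emb UNIV (\<lambda>_. borel :: real measure) J (\<Pi>\<^sub>E j\<in>J. F j)"
      by (rule set_eqI) (simp add: mem_prod_emb_UNIV)
    have Cm: "?C \<in> sets (PiM UNIV (\<lambda>_. borel :: real measure))"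
      unfolding C_eq by (rule sets_PiM_I) (use J F in auto)
    have Bm: "?B \<in> sets (PiM {..<n} (\<lambda>_. borel :: real measure))"
      by (rule sets_PiM_I_finite) (use F in auto)
    have meas: "(\<lambda>\<omega>. \<lambda>i\<in>{..<n}. X i \<omega>) \<in> M \<rightarrow>\<^sub>M PiM {..<n} (\<lambda>_. borel :: real measure)"
      by (rule measurable_restrict) (rule X)
    have pre: "(\<lambda>\<omega> i. X i \<omega>) -` ?C \<inter> space M = (\<lambda>\<omega>. \<lambda>i\<in>{..<n}. X i \<omega>) -` ?B \<inter> space M"
    proof (rule set_eqI)
      fix \<omega>
      have "(\<forall>j\<in>J. X j \<omega> \<in> F j) \<longleftrightarrow> (\<forall>i\<in>{..<n}. X i \<omega> \<in> (if i \<in> J then F i else UNIV))"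
        using Jn by auto
      then show "\<omega> \<in> (\<lambda>\<omega> i. X i \<omega>) -` ?C \<inter> space M \<longleftrightarrow> \<omega> \<in> (\<lambda>\<omega>. \<lambda>i\<in>{..<n}. X i \<omega>) -` ?B \<inter> space M"
        by (simp add: mem_prod_emb_UNIV restrict_PiE_iff Pi_iff)
    qed
    have "emeasure (seq_law M X) ?C = emeasure M ((\<lambda>\<omega> i. X i \<omega>) -` ?C \<inter> space M)"
      unfolding seq_law_def by (rule emeasure_distr[OF Xm Cm])
    also have "\<dots> = emeasure M ((\<lambda>\<omega>. \<lambda>i\<in>{..<n}. X i \<omega>) -` ?B \<inter> space M)"
      by (simp only: pre)
    also have "\<dots> = emeasure (distr M (PiM {..<n} (\<lambda>_. borel :: real measure)) (\<lambda>\<omega>. \<lambda>i\<in>{..<n}. X i \<omega>)) ?B"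
      by (rule emeasure_distr[OF meas Bm, symmetric])
    also have "\<dots> = emeasure (PiM {..<n} (\<lambda>_. exp_law \<theta>)) ?B"
      by (simp only: fin_law_eq[OF th M X prod])
    also have "\<dots> = (\<Prod>j<n. emeasure (exp_law \<theta>) (if j \<in> J then F j else UNIV))"
      by (rule P.emeasure_PiM) (use F in auto)
    also have "\<dots> = (\<Prod>j<n. if j \<in> J then emeasure (exp_law \<theta>) (F j) else 1)"
      by (rule prod.cong) (auto simp: L.emeasure_space_1[simplified])
    also have "\<dots> = (\<Prod>j\<in>{..<n} \<inter> J. emeasure (exp_law \<theta>) (F j))"
      by (rule prod.inter_restrict[symmetric]) simp
    also have "{..<n} \<inter> J = J" using Jn by auto
    finally show "emeasure (seq_law M X) ?C = (\<Prod>j\<in>J. emeasure (exp_law \<theta>) (F j))" .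
  qed
qed

lemma fdd_Suc_shift:
  assumes "\<And>n t. fdd M X n t = (\<Prod>j<n. Fexp \<theta> (t j))"
  shows "fdd M X (Suc d) t = Fexp \<theta> (t 0) * fdd M X d (\<lambda>j. t (Suc j))"
  using assms by (simp add: prod.lessThan_Suc_shift del: prod.lessThan_Suc)

lemma fdd_meas:
  fixes X :: "nat \<Rightarrow> 'a \<Rightarrow> real"
  assumes X: "\<And>i. X i \<in> borel_measurable M"
  shows "{\<omega> \<in> space M. \<forall>j<d. X j \<omega> \<le> (t j :: real)} \<in> sets M"
proof -
  have "{\<omega>\<in>space M. X j \<omega> \<le> t j} \<in> sets M" for j
  proof -
    have eq: "{\<omega>\<in>space M. X j \<omega> \<le> t j} = X j -` {..t j} \<inter> space M" by auto
    show ?thesis unfolding eq by (rule measurable_sets[OF X atMost_borel])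
  qed
  then have "{\<omega>\<in>space M. \<forall>j\<in>{..<d}. X j \<omega> \<le> t j} \<in> sets M"
    by (intro sets.sets_Collect_finite_All) auto
  then show ?thesis unfolding Ball_def lessThan_iff .
qed

lemma fdd_prod_from_eqn:
  assumes th: "0 < \<theta>" "\<theta> \<le> 1"
  and M: "prob_space M" and X: "\<And>i. X i \<in> borel_measurable M"
  and nonneg: "\<forall>i. \<forall>\<omega>\<in>space M. 0 \<le> X i \<omega>"
  and eqn: "\<forall>d t. (\<forall>j\<le>d. 0 \<le> t j) \<longrightarrow>
                fdd M X (Suc d) t =
                  (1 - \<theta>) * fdd M X d (\<lambda>j. t (Suc j))
                  + \<theta> * integral {0..t 0}
                      (\<lambda>s. fdd M X d (\<lambda>j. t (Suc j)) - fdd M X (Suc d) (t(0 := s)))"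
  shows "fdd M X d t = (\<Prod>j<d. Fexp \<theta> (t j))"
proof (induction d arbitrary: t)
  case 0
  interpret prob_space M by fact
  show ?case by (simp add: fdd_def prob_space)
next
  case (Suc d)
  interpret prob_space M by fact
  show ?case
  proof (cases "\<exists>j\<le>d. t j < 0")
    case True
    then obtain j where j: "j \<le> d" "t j < 0" by blast
    have e: "{\<omega> \<in> space M. \<forall>j<Suc d. X j \<omega> \<le> t j} = {}"
    proof (rule equals0I)
      fix \<omega> assume "\<omega> \<in> {\<omega> \<in> space M. \<forall>j<Suc d. X j \<omega> \<le> t j}"
      then have "X j \<omega> \<le> t j" "0 \<le> X j \<omega>" using j nonneg by auto
      then show False using j by linarith
    qed
    have "fdd M X (Suc d) t = 0" unfolding fdd_def e by simp
    moreover have "(\<Prod>j<Suc d. Fexp \<theta> (t j)) = 0"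
      by (rule prod_zero) (use j in \<open>auto simp: Fexp_def intro!: bexI[of _ j]\<close>)
    ultimately show ?thesis by simp
  next
    case False
    then have t0: "\<forall>j\<le>d. 0 \<le> t j" by (auto simp: not_less)
    define c where "c = fdd M X d (\<lambda>j. t (Suc j))"
    define H where "H s = fdd M X (Suc d) (t(0 := s))" for s
    have mono: "mono_on {0..} H"
    proof (rule mono_onI)
      fix r s :: real assume "r \<le> s"
      then have "{\<omega> \<in> space M. \<forall>j<Suc d. X j \<omega> \<le> (t(0 := r)) j} \<subseteq> {\<omega> \<in> space M. \<forall>j<Suc d. X j \<omega> \<le> (t(0 := s)) j}"
        by auto
      then show "H r \<le> H s"
        unfolding H_def fdd_def by (rule finite_measure_mono) (rule fdd_meas[OF X])
    qed
    have eq: "H s = (1-\<theta>)*c + \<theta> * integral {0..s} (\<lambda>u. c - H u)" if "0 \<le> s" for s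
    proof -
      have "\<forall>j\<le>d. 0 \<le> (t(0 := s)) j" using t0 that by auto
      from eqn[rule_format, of d "t(0 := s)", OF this[rule_format]]
      have "fdd M X (Suc d) (t(0 := s)) =
                  (1 - \<theta>) * fdd M X d (\<lambda>j. (t(0 := s)) (Suc j))
                  + \<theta> * integral {0..(t(0 := s)) 0}
                      (\<lambda>u. fdd M X d (\<lambda>j. (t(0 := s)) (Suc j)) - fdd M X (Suc d) ((t(0 := s))(0 := u)))" .
      then show ?thesis by (simp add: H_def c_def)
    qed
    have "H (t 0) = c * Fexp \<theta> (t 0)"
      by (rule ode_unique[OF mono eq]) (use t0 in auto)
    moreover have "H (t 0) = fdd M X (Suc d) t" by (simp add: H_def)
    moreover have "c = (\<Prod>j<d. Fexp \<theta> (t (Suc j)))" by (simp add: c_def Suc.IH)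
    ultimately show ?thesis using prod.lessThan_Suc_shift[of "\<lambda>j. Fexp \<theta> (t j)" d]
      by (simp add: mult.commute del: prod.lessThan_Suc)
  qed
qed

theorem mainTheorem13:
  fixes \<theta> :: real
  assumes "0 < \<theta>" and "\<theta> \<le> 1"
  shows "(\<forall>F. prob_distfun_nonneg F \<longrightarrow>
            (F = Fexp \<theta> \<longleftrightarrow>
             (\<forall>t\<ge>0. F t = (1 - \<theta>) + \<theta> * integral {0..t} (\<lambda>s. 1 - F s))))
       \<and> (\<forall>(M :: 'a measure) (X :: nat \<Rightarrow> 'a \<Rightarrow> real).
            prob_space M \<and> (\<forall>i. X i \<in> borel_measurable M)
            \<and> (\<forall>i. \<forall>\<omega>\<in>space M. 0 \<le> X i \<omega>) \<and> stationary_seq M X \<longrightarrow>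
            (seq_law M X = exp_seq_law \<theta> \<longleftrightarrow>
             (\<forall>d t. (\<forall>j\<le>d. 0 \<le> t j) \<longrightarrow>
                fdd M X (Suc d) t =
                  (1 - \<theta>) * fdd M X d (\<lambda>j. t (Suc j))
                  + \<theta> * integral {0..t 0}
                      (\<lambda>s. fdd M X d (\<lambda>j. t (Suc j)) - fdd M X (Suc d) (t(0 := s))))))"
proof (intro conjI allI impI)
  fix F :: "real \<Rightarrow> real"
  assume F: "prob_distfun_nonneg F"
  show "F = Fexp \<theta> \<longleftrightarrow> (\<forall>t\<ge>0. F t = (1 - \<theta>) + \<theta> * integral {0..t} (\<lambda>s. 1 - F s))"
  proof
    assume "F = Fexp \<theta>"
    then show "\<forall>t\<ge>0. F t = (1 - \<theta>) + \<theta> * integral {0..t} (\<lambda>s. 1 - F s)"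
      using Fexp_eqn[of _ 1 \<theta>] by simp
  next
    assume eqF: "\<forall>t\<ge>0. F t = (1 - \<theta>) + \<theta> * integral {0..t} (\<lambda>s. 1 - F s)"
    show "F = Fexp \<theta>"
    proof
      fix t
      show "F t = Fexp \<theta> t"
      proof (cases "t < 0")
        case True
        then show ?thesis using F by (simp add: prob_distfun_nonneg_def Fexp_def)
      next
        case False
        have mono: "mono_on {0..} F" using F by (auto simp: prob_distfun_nonneg_def mono_def mono_on_def)
        have "F t = 1 * Fexp \<theta> t"
          by (rule ode_unique[OF mono]) (use eqF False in auto)
        then show ?thesis by simp
      qed
    qed
  qed
next
  fix M :: "'a measure" and X :: "nat \<Rightarrow> 'a \<Rightarrow> real"
  assume A: "prob_space M \<and> (\<forall>i. X i \<in> borel_measurable M) \<and> (\<forall>i. \<forall>\<omega>\<in>space M. 0 \<le> X i \<omega>) \<and> stationary_seq M X"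
  then have M: "prob_space M" and X: "\<And>i. X i \<in> borel_measurable M"
    and nonneg: "\<forall>i. \<forall>\<omega>\<in>space M. 0 \<le> X i \<omega>" by auto
  show "seq_law M X = exp_seq_law \<theta> \<longleftrightarrow>
             (\<forall>d t. (\<forall>j\<le>d. 0 \<le> t j) \<longrightarrow>
                fdd M X (Suc d) t =
                  (1 - \<theta>) * fdd M X d (\<lambda>j. t (Suc j))
                  + \<theta> * integral {0..t 0}
                      (\<lambda>s. fdd M X d (\<lambda>j. t (Suc j)) - fdd M X (Suc d) (t(0 := s))))"
  proof
    assume law: "seq_law M X = exp_seq_law \<theta>"
    have P: "\<And>n t. fdd M X n t = (\<Prod>j<n. Fexp \<theta> (t j))"
      by (rule fdd_of_law[OF assms M X law])
    show "\<forall>d t. (\<forall>j\<le>d. 0 \<le> t j) \<longrightarrow>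
                fdd M X (Suc d) t =
                  (1 - \<theta>) * fdd M X d (\<lambda>j. t (Suc j))
                  + \<theta> * integral {0..t 0}
                      (\<lambda>s. fdd M X d (\<lambda>j. t (Suc j)) - fdd M X (Suc d) (t(0 := s)))"
    proof (intro allI impI)
      fix d :: nat and t :: "nat \<Rightarrow> real" assume t: "\<forall>j\<le>d. 0 \<le> t j"
      define c where "c = fdd M X d (\<lambda>j. t (Suc j))"
      have 1: "fdd M X (Suc d) t = c * Fexp \<theta> (t 0)"
        using fdd_Suc_shift[OF P] by (simp add: c_def)
      have 2: "(\<lambda>s. fdd M X d (\<lambda>j. t (Suc j)) - fdd M X (Suc d) (t(0 := s))) = (\<lambda>s. c - c * Fexp \<theta> s)"
      proof
        fix s
        show "fdd M X d (\<lambda>j. t (Suc j)) - fdd M X (Suc d) (t(0 := s)) = c - c * Fexp \<theta> s"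
          using fdd_Suc_shift[OF P, of d "t(0 := s)"] by (simp add: c_def)
      qed
      show "fdd M X (Suc d) t =
                  (1 - \<theta>) * fdd M X d (\<lambda>j. t (Suc j))
                  + \<theta> * integral {0..t 0}
                      (\<lambda>s. fdd M X d (\<lambda>j. t (Suc j)) - fdd M X (Suc d) (t(0 := s)))"
        unfolding 1 2 using Fexp_eqn[of "t 0" c \<theta>] t by (simp add: c_def)
    qed
  next
    assume eqn: "\<forall>d t. (\<forall>j\<le>d. 0 \<le> t j) \<longrightarrow>
                fdd M X (Suc d) t =
                  (1 - \<theta>) * fdd M X d (\<lambda>j. t (Suc j))
                  + \<theta> * integral {0..t 0}
                      (\<lambda>s. fdd M X d (\<lambda>j. t (Suc j)) - fdd M X (Suc d) (t(0 := s)))"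
    show "seq_law M X = exp_seq_law \<theta>"
      by (rule seq_law_eq[OF assms M X]) (rule fdd_prod_from_eqn[OF assms M X nonneg eqn])
  qed
qed

end
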